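(* Let $r\le p$ be positive integers with $p$ prime, and let $S\subseteq\{0,\dots,p-1\}$ with $|S|=k$. If $S$ does not contain an $r$-weighted arithmetic progression modulo $p$, then the code $\mathcal{C}(r,p,S)$ is an $(r,k)$-batch code of dimension $rp$.
   Context: Array construction: let $n=rp$ and $S=\{s_0<\dots<s_{k-1}\}\subseteq\{0,\dots,p-1\}$. For $s,t\in\{0,\dots,p-1\}$ let $D_{s,t}=\{(i,\langle t+is\rangle_p): i=0,\dots,r-1\}$, where $\langle x\rangle_p=x\bmod p$. An information vector $\boldsymbol{x}\in\{0,1\}^n$ is written as an array $(x_{i,j})$, $(i,j)\in\{0,\dots,r-1\}\times\{0,\dots,p-1\}$, and redundancy bits $\rho_{\ell,t}=\sum_{(i,j)\in D_{s_\ell,t}}x_{i,j}\pmod2$ are added for $\ell\in\{0,\dots,k-1\}$, $t\in\{0,\dots,p-1\}$; $\mathcal{C}(r,p,S)$ is the binary code of all words $(\boldsymbol{x},(\rho_{\ell,t}))$. The set $S$ contains no $r$-weighted arithmetic progression modulo $p$ if there do not exist pairwise distinct $s_1,s_2,s_3\in S$ and integers $0<x,y<r-1$ with $x+y<r$ such that $xs_1+ys_2\equiv(x+y)s_3\pmod p$. A binary linear code encoding $n$ information bits is an $(r,k)$-batch code if for every multiset $\{i_1,\dots,i_k\}$ of information indices there exist $k$ mutually disjoint sets $R_1,\dots,R_k$ of coordinates, each of size at most $r$, such that $x_{i_j}$ is a function of the codeword bits indexed by $R_j$. *)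

theory Defs
  imports Main "HOL-Computational_Algebra.Primes"
begin

datatype coord = Info nat nat | Red nat nat

definition sel :: "nat set \<Rightarrow> nat \<Rightarrow> nat" where
  "sel S l = sorted_list_of_set S ! l"

definition diag :: "nat \<Rightarrow> nat \<Rightarrow> nat \<Rightarrow> nat \<Rightarrow> (nat \<times> nat) set" where
  "diag r p s t = {(i, (t + i * s) mod p) | i. i < r}"

definition info_idx :: "nat \<Rightarrow> nat \<Rightarrow> (nat \<times> nat) set" where
  "info_idx r p = {0..<r} \<times> {0..<p}"

text \<open>Messages: binary arrays indexed by the information index set
  (value False outside, as a canonical representative).\<close>
definition messages :: "'i set \<Rightarrow> ('i \<Rightarrow> bool) set" where
  "messages I = {x. \<forall>i. i \<notin> I \<longrightarrow> \<not> x i}"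

definition parity :: "(nat \<times> nat \<Rightarrow> bool) \<Rightarrow> (nat \<times> nat) set \<Rightarrow> bool" where
  "parity x A = odd (card {a \<in> A. x a})"

definition coords :: "nat \<Rightarrow> nat \<Rightarrow> nat set \<Rightarrow> coord set" where
  "coords r p S = {Info i j | i j. i < r \<and> j < p} \<union> {Red l t | l t. l < card S \<and> t < p}"

definition encode :: "nat \<Rightarrow> nat \<Rightarrow> nat set \<Rightarrow> (nat \<times> nat \<Rightarrow> bool) \<Rightarrow> coord \<Rightarrow> bool" where
  "encode r p S x c = (case c of
      Info i j \<Rightarrow> i < r \<and> j < p \<and> x (i, j)
    | Red l t \<Rightarrow> l < card S \<and> t < p \<and> parity x (diag r p (sel S l) t))"

definition code :: "nat \<Rightarrow> nat \<Rightarrow> nat set \<Rightarrow> (coord \<Rightarrow> bool) set" where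
  "code r p S = encode r p S ` messages (info_idx r p)"

definition no_weighted_AP :: "nat \<Rightarrow> nat \<Rightarrow> nat set \<Rightarrow> bool" where
  "no_weighted_AP r p S \<longleftrightarrow>
     \<not> (\<exists>s1\<in>S. \<exists>s2\<in>S. \<exists>s3\<in>S. \<exists>x y :: int.
          s1 \<noteq> s2 \<and> s1 \<noteq> s3 \<and> s2 \<noteq> s3 \<and>
          0 < x \<and> x < int r - 1 \<and> 0 < y \<and> y < int r - 1 \<and> x + y < int r \<and>
          (x * int s1 + y * int s2) mod int p = ((x + y) * int s3) mod int p)"

text \<open>(r,k)-batch code: for every multiset of k information indices
  (given as a list/indexing req 0..k-1) there are k pairwise disjoint
  coordinate sets R_j of size at most r such that the requested bit
  req j is a function of the codeword bits indexed by R_j.\<close>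
definition batch_code ::
  "'i set \<Rightarrow> 'c set \<Rightarrow> (('i \<Rightarrow> bool) \<Rightarrow> 'c \<Rightarrow> bool) \<Rightarrow> nat \<Rightarrow> nat \<Rightarrow> bool" where
  "batch_code I Cs E r k \<longleftrightarrow>
     (\<forall>req :: nat \<Rightarrow> 'i. (\<forall>j<k. req j \<in> I) \<longrightarrow>
        (\<exists>R :: nat \<Rightarrow> 'c set.
           (\<forall>j<k. R j \<subseteq> Cs \<and> finite (R j) \<and> card (R j) \<le> r) \<and>
           (\<forall>j1<k. \<forall>j2<k. j1 \<noteq> j2 \<longrightarrow> R j1 \<inter> R j2 = {}) \<and>
           (\<forall>j<k. \<exists>g :: ('c \<Rightarrow> bool) \<Rightarrow> bool.
               \<forall>x \<in> messages I. g (\<lambda>c. if c \<in> R j then E x c else False) = x (req j))))"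

end

theory Submission
  imports Defs
begin


definition onl :: "nat \<Rightarrow> nat \<Rightarrow> nat \<Rightarrow> nat \<times> nat \<Rightarrow> nat \<times> nat \<Rightarrow> bool" where
  "onl r p s P X \<longleftrightarrow> fst X < r \<and> snd X < p \<and>
     int p dvd (int (snd X) - int (snd P) - (int (fst X) - int (fst P)) * int s)"

definition tof :: "nat \<Rightarrow> nat \<Rightarrow> nat \<times> nat \<Rightarrow> nat" where
  "tof p s P = (snd P + (p - 1) * (fst P * s)) mod p"

lemma small_dvd: "int p dvd (x::int) \<Longrightarrow> \<bar>x\<bar> < int p \<Longrightarrow> x = 0"
  using dvd_imp_le_int[of x "int p"] by (cases "x = 0") auto

lemma diag_tof:
  assumes "0 < p"
  shows "X \<in> diag r p s (tof p s P) \<longleftrightarrow> onl r p s P X"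
proof -
  obtain i c where X: "X = (i,c)" by fastforce
  obtain a b where P: "P = (a,b)" by fastforce
  define t where "t = tof p s P"
  have t1: "int p dvd (int t - (int b - int a * int s))"
  proof -
    have "int t = (int b + (int p - 1) * (int a * int s)) mod int p"
      using assms unfolding t_def tof_def P by (simp add: of_nat_mod of_nat_diff)
    then have "int p dvd (int t - (int b + (int p - 1) * (int a * int s)))"
      by (metis mod_mod_trivial mod_eq_dvd_iff)
    moreover have "int b + (int p - 1) * (int a * int s) - (int b - int a * int s) = int p * (int a * int s)"
      by (simp add: algebra_simps)
    then have "int p dvd (int b + (int p - 1) * (int a * int s) - (int b - int a * int s))"
      by simp
    ultimately have "int p dvd (int t - (int b + (int p - 1) * (int a * int s)) + (int b + (int p - 1) * (int a * int s) - (int b - int a * int s)))"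
      by (rule dvd_add)
    then show ?thesis by (simp add: algebra_simps)
  qed
  have "X \<in> diag r p s t \<longleftrightarrow> i < r \<and> c = (t + i * s) mod p"
    unfolding diag_def X by auto
  also have "\<dots> \<longleftrightarrow> onl r p s P X"
  proof
    assume h: "i < r \<and> c = (t + i * s) mod p"
    then have "c < p" using assms by simp
    have "int c = (int t + int i * int s) mod int p" using h by (simp add: of_nat_mod)
    then have "int p dvd (int c - (int t + int i * int s))"
      by (metis mod_mod_trivial mod_eq_dvd_iff)
    then have "int p dvd (int c - (int t + int i * int s) + (int t - (int b - int a * int s)))"
      using t1 by (rule dvd_add)
    then show "onl r p s P X" unfolding onl_def X P using h \<open>c < p\<close>
      by (simp add: algebra_simps)
  next
    assume h: "onl r p s P X"
    then have d: "int p dvd (int c - int b - (int i - int a) * int s)" and "c < p" "i < r"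
      unfolding onl_def X P by auto
    have "int p dvd (int c - int b - (int i - int a) * int s - (int t - (int b - int a * int s)))"
      using d t1 by (rule dvd_diff)
    then have "int p dvd (int c - (int t + int i * int s))" by (simp add: algebra_simps)
    then have "int c mod int p = (int t + int i * int s) mod int p"
      by (simp add: mod_eq_dvd_iff)
    then have "int c = int ((t + i * s) mod p)" using \<open>c < p\<close> by (simp add: of_nat_mod)
    then show "i < r \<and> c = (t + i * s) mod p" using \<open>i < r\<close> by linarith
  qed
  finally show ?thesis unfolding t_def .
qed

lemma two_lines:
  assumes "prime p" "r \<le> p" "s \<noteq> s'" "s < p" "s' < p"
    "onl r p s A X" "onl r p s' B X" "onl r p s A Y" "onl r p s' B Y"
  shows "X = Y"
proof -
  obtain i c where X: "X = (i,c)" by fastforce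
  obtain i' c' where Y: "Y = (i',c')" by fastforce
  obtain a b where A: "A = (a,b)" by fastforce
  obtain a' b' where B: "B = (a',b')" by fastforce
  let ?p = "int p"
  have h6: "?p dvd (int c - int b - (int i - int a) * int s)" and "i < r" "c < p"
    using assms(6) unfolding onl_def X A by auto
  have h8: "?p dvd (int c' - int b - (int i' - int a) * int s)" and "i' < r" "c' < p"
    using assms(8) unfolding onl_def Y A by auto
  have h7: "?p dvd (int c - int b' - (int i - int a') * int s')"
    using assms(7) unfolding onl_def X B by auto
  have h9: "?p dvd (int c' - int b' - (int i' - int a') * int s')"
    using assms(9) unfolding onl_def Y B by auto
  have e1: "(int c - int b - (int i - int a) * int s) - (int c' - int b - (int i' - int a) * int s)
     = (int c - int c') - (int i - int i') * int s" by (simp add: algebra_simps)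
  have 1: "?p dvd ((int c - int c') - (int i - int i') * int s)"
    using dvd_diff[OF h6 h8] unfolding e1 .
  have e2: "(int c - int b' - (int i - int a') * int s') - (int c' - int b' - (int i' - int a') * int s')
     = (int c - int c') - (int i - int i') * int s'" by (simp add: algebra_simps)
  have 2: "?p dvd ((int c - int c') - (int i - int i') * int s')"
    using dvd_diff[OF h7 h9] unfolding e2 .
  have e3: "((int c - int c') - (int i - int i') * int s) - ((int c - int c') - (int i - int i') * int s')
      = (int i - int i') * (int s' - int s)" by (simp add: algebra_simps)
  have "?p dvd ((int i - int i') * (int s' - int s))"
    using dvd_diff[OF 1 2] unfolding e3 .
  moreover have "prime ?p" using assms(1) by simp
  ultimately have "?p dvd (int i - int i') \<or> ?p dvd (int s' - int s)"
    using prime_dvd_mult_iff by blast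
  moreover have "\<bar>int s' - int s\<bar> < ?p" using assms by linarith
  moreover have "int s' - int s \<noteq> 0" using assms by simp
  moreover have "\<bar>int i - int i'\<bar> < ?p" using \<open>i < r\<close> \<open>i' < r\<close> assms(2) by linarith
  ultimately have "int i - int i' = 0" using small_dvd by blast
  then have ii: "i = i'" by simp
  then have "?p dvd (int c - int c')" using 1 by simp
  moreover have "\<bar>int c - int c'\<bar> < ?p" using \<open>c < p\<close> \<open>c' < p\<close> by linarith
  ultimately have "int c - int c' = 0" using small_dvd by blast
  then have "c = c'" by simp
  then show ?thesis using X Y ii by simp
qed



lemma apI:
  assumes "s1 \<in> S" "s2 \<in> S" "s3 \<in> S" "s1 \<noteq> s2" "s1 \<noteq> s3" "s2 \<noteq> s3"
    "0 < x" "0 < y" "x + y < int r"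
    "int p dvd (x * int s1 + y * int s2 - (x + y) * int s3)"
  shows "\<not> no_weighted_AP r p S"
proof -
  have "(x * int s1 + y * int s2) mod int p = ((x + y) * int s3) mod int p"
    using assms(10) by (simp add: mod_eq_dvd_iff)
  moreover have "x < int r - 1" "y < int r - 1" using assms by linarith+
  ultimately show ?thesis unfolding no_weighted_AP_def using assms by blast
qed

lemma ap_contra:
  assumes noap: "no_weighted_AP r p S"
    and S: "s1 \<in> S" "s2 \<in> S" "s3 \<in> S" "s1 \<noteq> s2" "s1 \<noteq> s3" "s2 \<noteq> s3"
    and dv: "int p dvd (d2 * int s2 - d1 * int s1 - (d2 - d1) * int s3)"
    and nz: "d1 \<noteq> 0" "d2 \<noteq> 0" "d1 \<noteq> d2"
    and rg: "0 \<le> a" "a < int r" "0 \<le> a + d1" "a + d1 < int r" "0 \<le> a + d2" "a + d2 < int r"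
  shows False
proof -
  let ?E = "d2 * int s2 - d1 * int s1 - (d2 - d1) * int s3"
  consider "0 < d1" "d1 < d2" | "0 < d2" "d2 < d1" | "d1 < 0" "0 < d2" | "d2 < 0" "0 < d1"
    | "d1 < d2" "d2 < 0" | "d2 < d1" "d1 < 0"
    using nz by linarith
  then show False
  proof cases
    case 1
    have eq: "d1 * int s1 + (d2 - d1) * int s3 - (d1 + (d2 - d1)) * int s2 = - ?E" by (simp add: algebra_simps)
    have "int p dvd (d1 * int s1 + (d2 - d1) * int s3 - (d1 + (d2 - d1)) * int s2)" unfolding eq using dv by (simp only: dvd_minus_iff)
    then show False using apI[of s1 S s3 s2 d1 "d2 - d1" r p] S 1 rg noap by auto
  next
    case 2
    have eq: "d2 * int s2 + (d1 - d2) * int s3 - (d2 + (d1 - d2)) * int s1 = ?E" by (simp add: algebra_simps)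
    have "int p dvd (d2 * int s2 + (d1 - d2) * int s3 - (d2 + (d1 - d2)) * int s1)" unfolding eq using dv by (simp only: dvd_minus_iff)
    then show False using apI[of s2 S s3 s1 d2 "d1 - d2" r p] S 2 rg noap by auto
  next
    case 3
    have eq: "(- d1) * int s1 + d2 * int s2 - ((- d1) + d2) * int s3 = ?E" by (simp add: algebra_simps)
    have "int p dvd ((- d1) * int s1 + d2 * int s2 - ((- d1) + d2) * int s3)" unfolding eq using dv by (simp only: dvd_minus_iff)
    then show False using apI[of s1 S s2 s3 "- d1" d2 r p] S 3 rg noap by auto
  next
    case 4
    have eq: "(- d2) * int s2 + d1 * int s1 - ((- d2) + d1) * int s3 = - ?E" by (simp add: algebra_simps)
    have "int p dvd ((- d2) * int s2 + d1 * int s1 - ((- d2) + d1) * int s3)" unfolding eq using dv by (simp only: dvd_minus_iff)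
    then show False using apI[of s2 S s1 s3 "- d2" d1 r p] S 4 rg noap by auto
  next
    case 5
    have eq: "(d2 - d1) * int s3 + (- d2) * int s2 - ((d2 - d1) + (- d2)) * int s1 = - ?E" by (simp add: algebra_simps)
    have "int p dvd ((d2 - d1) * int s3 + (- d2) * int s2 - ((d2 - d1) + (- d2)) * int s1)" unfolding eq using dv by (simp only: dvd_minus_iff)
    then show False using apI[of s3 S s2 s1 "d2 - d1" "- d2" r p] S 5 rg noap by auto
  next
    case 6
    have eq: "(d1 - d2) * int s3 + (- d1) * int s1 - ((d1 - d2) + (- d1)) * int s2 = ?E" by (simp add: algebra_simps)
    have "int p dvd ((d1 - d2) * int s3 + (- d1) * int s1 - ((d1 - d2) + (- d1)) * int s2)" unfolding eq using dv by (simp only: dvd_minus_iff)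
    then show False using apI[of s3 S s1 s2 "d1 - d2" "- d1" r p] S 6 rg noap by auto
  qed
qed



lemma onl_self: "fst P < r \<Longrightarrow> snd P < p \<Longrightarrow> onl r p s P P"
  unfolding onl_def by simp

lemma triangle:
  assumes pr: "prime p" and rp: "r \<le> p" and noap: "no_weighted_AP r p S"
    and S: "s1 \<in> S" "s2 \<in> S" "s3 \<in> S" "s1 \<noteq> s2" "s1 \<noteq> s3" "s2 \<noteq> s3"
    and Sp: "S \<subseteq> {0..<p}"
    and P: "fst P < r" "snd P < p"
    and o1: "onl r p s1 P X1" and o2: "onl r p s2 P X2"
    and o3: "onl r p s3 Q X1" and o4: "onl r p s3 Q X2" and nP: "\<not> onl r p s3 Q P"
  shows False
proof -
  obtain a b where Pe: "P = (a,b)" by fastforce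
  obtain i1 c1 where X1: "X1 = (i1,c1)" by fastforce
  obtain i2 c2 where X2: "X2 = (i2,c2)" by fastforce
  obtain qa qb where Q: "Q = (qa,qb)" by fastforce
  have s12: "s1 < p" "s2 < p" "s3 < p" using S Sp by auto
  have h1: "int p dvd (int c1 - int b - (int i1 - int a) * int s1)" and "i1 < r" "c1 < p"
    using o1 unfolding onl_def X1 Pe by auto
  have h2: "int p dvd (int c2 - int b - (int i2 - int a) * int s2)" and "i2 < r" "c2 < p"
    using o2 unfolding onl_def X2 Pe by auto
  have h3: "int p dvd (int c1 - int qb - (int i1 - int qa) * int s3)"
    using o3 unfolding onl_def X1 Q by auto
  have h4: "int p dvd (int c2 - int qb - (int i2 - int qa) * int s3)"
    using o4 unfolding onl_def X2 Q by auto
  have ab: "a < r" "b < p" using P Pe by auto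
  have d1: "int i1 - int a \<noteq> 0"
  proof
    assume "int i1 - int a = 0"
    then have "int p dvd (int c1 - int b)" using h1 by simp
    moreover have "\<bar>int c1 - int b\<bar> < int p" using \<open>c1 < p\<close> ab by linarith
    ultimately have "int c1 - int b = 0" using small_dvd by blast
    then have "X1 = P" using \<open>int i1 - int a = 0\<close> X1 Pe by simp
    then show False using o3 nP by simp
  qed
  have d2: "int i2 - int a \<noteq> 0"
  proof
    assume "int i2 - int a = 0"
    then have "int p dvd (int c2 - int b)" using h2 by simp
    moreover have "\<bar>int c2 - int b\<bar> < int p" using \<open>c2 < p\<close> ab by linarith
    ultimately have "int c2 - int b = 0" using small_dvd by blast
    then have "X2 = P" using \<open>int i2 - int a = 0\<close> X2 Pe by simp
    then show False using o4 nP by simp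
  qed
  have d12: "int i1 - int a \<noteq> int i2 - int a"
  proof
    assume "int i1 - int a = int i2 - int a"
    then have ii: "i1 = i2" by simp
    have e: "(int c1 - int qb - (int i1 - int qa) * int s3) - (int c2 - int qb - (int i2 - int qa) * int s3)
       = int c1 - int c2" using ii by (simp add: algebra_simps)
    have "int p dvd (int c1 - int c2)" using dvd_diff[OF h3 h4] unfolding e .
    moreover have "\<bar>int c1 - int c2\<bar> < int p" using \<open>c1 < p\<close> \<open>c2 < p\<close> by linarith
    ultimately have "int c1 - int c2 = 0" using small_dvd by blast
    then have "X1 = X2" using ii X1 X2 by simp
    then have "onl r p s2 P X1" using o2 by simp
    have "X1 = P"
      using two_lines[OF pr rp \<open>s1 \<noteq> s2\<close> s12(1,2) o1 \<open>onl r p s2 P X1\<close> onl_self[OF P] onl_self[OF P]] .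
    then show False using o3 nP by simp
  qed
  let ?d1 = "int i1 - int a" and ?d2 = "int i2 - int a"
  have e: "(int c2 - int b - (int i2 - int a) * int s2) - (int c1 - int b - (int i1 - int a) * int s1)
     - ((int c2 - int qb - (int i2 - int qa) * int s3) - (int c1 - int qb - (int i1 - int qa) * int s3))
     = - (?d2 * int s2 - ?d1 * int s1 - (?d2 - ?d1) * int s3)"
    by (simp add: algebra_simps)
  have "int p dvd - (?d2 * int s2 - ?d1 * int s1 - (?d2 - ?d1) * int s3)"
    using dvd_diff[OF dvd_diff[OF h2 h1] dvd_diff[OF h4 h3]] unfolding e .
  then have dv: "int p dvd (?d2 * int s2 - ?d1 * int s1 - (?d2 - ?d1) * int s3)"
    by (simp only: dvd_minus_iff)
  show False
    apply (rule ap_contra[OF noap S dv d1 d2 d12, of "int a"])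
    using ab \<open>i1 < r\<close> \<open>i2 < r\<close> by auto
qed



definition Ln :: "nat \<Rightarrow> nat \<Rightarrow> nat set \<Rightarrow> nat \<Rightarrow> nat \<times> nat \<Rightarrow> (nat \<times> nat) set" where
  "Ln r p S l P = diag r p (sel S l) (tof p (sel S l) P)"

definition isfirst :: "(nat \<Rightarrow> 'a) \<Rightarrow> nat \<Rightarrow> bool" where
  "isfirst req j \<longleftrightarrow> (\<forall>j'<j. req j' \<noteq> req j)"

definition okj :: "nat \<Rightarrow> nat \<Rightarrow> nat set \<Rightarrow> nat \<Rightarrow> (nat \<Rightarrow> nat \<times> nat) \<Rightarrow> (nat \<Rightarrow> nat) \<Rightarrow> nat \<Rightarrow> bool" where
  "okj r p S k req \<sigma> j \<longleftrightarrow> \<sigma> j < k \<and>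
     (\<forall>j'<k. req j' \<noteq> req j \<longrightarrow> req j' \<notin> Ln r p S (\<sigma> j) (req j)) \<and>
     (\<forall>j'<j. \<not> isfirst req j' \<longrightarrow>
        (if req j' = req j then \<sigma> j' \<noteq> \<sigma> j
         else Ln r p S (\<sigma> j) (req j) \<inter> Ln r p S (\<sigma> j') (req j') = {}))"

lemma okj_upd: "(\<And>i. i \<le> j \<Longrightarrow> \<sigma>' i = \<sigma> i) \<Longrightarrow> okj r p S k req \<sigma>' j = okj r p S k req \<sigma> j"
  unfolding okj_def by auto

lemma card_UN_le1:
  assumes "finite I" "\<And>i. i \<in> I \<Longrightarrow> card (A i) \<le> 1"
  shows "card (\<Union>i\<in>I. A i) \<le> card I"
proof -
  have "card (\<Union>i\<in>I. A i) \<le> (\<Sum>i\<in>I. card (A i))" using card_UN_le[OF assms(1)] .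
  also have "\<dots> \<le> (\<Sum>i\<in>I. 1)" using assms(2) by (intro sum_mono) auto
  finally show ?thesis by simp
qed

lemma same_slope:
  assumes "onl r p s P X" "onl r p s Q X" "fst P < r" "snd P < p"
  shows "onl r p s Q P"
proof -
  obtain a b where Pe: "P = (a,b)" by fastforce
  obtain i c where X: "X = (i,c)" by fastforce
  obtain qa qb where Q: "Q = (qa,qb)" by fastforce
  have h1: "int p dvd (int c - int b - (int i - int a) * int s)"
    using assms(1) unfolding onl_def X Pe by auto
  have h2: "int p dvd (int c - int qb - (int i - int qa) * int s)"
    using assms(2) unfolding onl_def X Q by auto
  have e: "(int c - int qb - (int i - int qa) * int s) - (int c - int b - (int i - int a) * int s)
    = int b - int qb - (int a - int qa) * int s" by (simp add: algebra_simps)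
  have "int p dvd (int b - int qb - (int a - int qa) * int s)"
    using dvd_diff[OF h2 h1] unfolding e .
  then show ?thesis using assms(3,4) unfolding onl_def Pe Q by simp
qed

locale bctx =
  fixes r p k :: nat and S :: "nat set" and req :: "nat \<Rightarrow> nat \<times> nat"
  assumes r0: "0 < r" and rp: "r \<le> p" and pr: "prime p"
    and Sp: "S \<subseteq> {0..<p}" and cS: "card S = k" and noap: "no_weighted_AP r p S"
    and rq: "\<And>j. j < k \<Longrightarrow> req j \<in> info_idx r p"

context bctx
begin

lemma p0: "0 < p" using pr prime_gt_0_nat by blast

lemma finS: "finite S" using Sp finite_subset by blast

lemma sel_in: "l < k \<Longrightarrow> sel S l \<in> S"
  unfolding sel_def using finS cS by (metis nth_mem set_sorted_list_of_set sorted_list_of_set.length_sorted_key_list_of_set)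

lemma sel_lt: "l < k \<Longrightarrow> sel S l < p" using sel_in[of l] Sp by auto

lemma sel_inj: "l1 < k \<Longrightarrow> l2 < k \<Longrightarrow> sel S l1 = sel S l2 \<Longrightarrow> l1 = l2"
  unfolding sel_def using finS cS
  by (metis distinct_sorted_list_of_set nth_eq_iff_index_eq sorted_list_of_set.length_sorted_key_list_of_set)

lemma Ln_iff: "X \<in> Ln r p S l P \<longleftrightarrow> onl r p (sel S l) P X"
  unfolding Ln_def using diag_tof[OF p0] .

lemma rq_rng: "j < k \<Longrightarrow> fst (req j) < r \<and> snd (req j) < p"
  using rq unfolding info_idx_def by force

end



context bctx
begin

lemma card_T1:
  assumes "fst P < r" "snd P < p" "Q \<noteq> P"
  shows "card {l. l < k \<and> Q \<in> Ln r p S l P} \<le> 1"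
proof -
  have "\<forall>l1\<in>{l. l < k \<and> Q \<in> Ln r p S l P}. \<forall>l2\<in>{l. l < k \<and> Q \<in> Ln r p S l P}. l1 = l2"
  proof (intro ballI)
    fix l1 l2 assume a1: "l1 \<in> {l. l < k \<and> Q \<in> Ln r p S l P}" and a2: "l2 \<in> {l. l < k \<and> Q \<in> Ln r p S l P}"
    show "l1 = l2"
    proof (rule ccontr)
      assume ne: "l1 \<noteq> l2"
      then have "sel S l1 \<noteq> sel S l2" using sel_inj a1 a2 by blast
      moreover have "onl r p (sel S l1) P Q" "onl r p (sel S l2) P Q" using a1 a2 Ln_iff by auto
      ultimately have "P = Q"
        using two_lines[OF pr rp _ sel_lt sel_lt onl_self[OF assms(1,2)] onl_self[OF assms(1,2)]] a1 a2
        by blast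
      then show False using assms(3) by simp
    qed
  qed
  then show ?thesis using card_le_Suc0_iff_eq[of "{l. l < k \<and> Q \<in> Ln r p S l P}"] by simp
qed

lemma card_C:
  assumes "fst P < r" "snd P < p" "l' < k" "P \<notin> Ln r p S l' P'"
  shows "card {l. l < k \<and> Ln r p S l P \<inter> Ln r p S l' P' \<noteq> {}} \<le> 1"
proof -
  let ?A = "{l. l < k \<and> Ln r p S l P \<inter> Ln r p S l' P' \<noteq> {}}"
  have nl': "l' \<notin> ?A"
  proof
    assume "l' \<in> ?A"
    then obtain X where "X \<in> Ln r p S l' P" "X \<in> Ln r p S l' P'" by auto
    then have "onl r p (sel S l') P' P" using same_slope assms(1,2) Ln_iff by blast
    then show False using assms(4) Ln_iff by blast
  qed
  have "\<forall>l1\<in>?A. \<forall>l2\<in>?A. l1 = l2"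
  proof (intro ballI)
    fix l1 l2 assume a1: "l1 \<in> ?A" and a2: "l2 \<in> ?A"
    show "l1 = l2"
    proof (rule ccontr)
      assume ne: "l1 \<noteq> l2"
      have n1: "l1 \<noteq> l'" "l2 \<noteq> l'" using nl' a1 a2 by auto
      obtain X1 where x1: "X1 \<in> Ln r p S l1 P" "X1 \<in> Ln r p S l' P'" using a1 by auto
      obtain X2 where x2: "X2 \<in> Ln r p S l2 P" "X2 \<in> Ln r p S l' P'" using a2 by auto
      have k12: "l1 < k" "l2 < k" using a1 a2 by auto
      show False
        apply (rule triangle[OF pr rp noap sel_in[OF k12(1)] sel_in[OF k12(2)] sel_in[OF assms(3)] _ _ _ Sp assms(1,2)])
        using sel_inj k12 assms(3) ne n1 apply blast
        using sel_inj k12 assms(3) ne n1 apply blast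
        using sel_inj k12 assms(3) ne n1 apply blast
        using x1 x2 assms(4) Ln_iff by blast+
    qed
  qed
  then show ?thesis using card_le_Suc0_iff_eq[of ?A] by simp
qed

end



context bctx
begin

lemma img_first: "req ` {..<k} \<subseteq> req ` {j. j < k \<and> isfirst req j}"
proof
  fix Q assume "Q \<in> req ` {..<k}"
  then obtain j where j: "j < k" "req j = Q" by auto
  define j0 where "j0 = (LEAST i. req i = Q)"
  have j0: "req j0 = Q" unfolding j0_def by (rule LeastI[of "\<lambda>i. req i = Q" j]) (rule j(2))
  have "j0 \<le> j" unfolding j0_def by (rule Least_le) (rule j(2))
  have "isfirst req j0" unfolding isfirst_def
  proof (intro allI impI)
    fix j' assume "j' < j0"
    then have "\<not> req j' = Q" unfolding j0_def by (rule not_less_Least)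
    then show "req j' \<noteq> req j0" using j0 by simp
  qed
  then have "j0 \<in> {j. j < k \<and> isfirst req j}" using \<open>j0 \<le> j\<close> j(1) by simp
  then show "Q \<in> req ` {j. j < k \<and> isfirst req j}" using j0 by (metis image_eqI)
qed

lemma greedy_step:
  assumes n: "n < k" and nf: "\<not> isfirst req n"
    and IH: "\<forall>j<n. \<not> isfirst req j \<longrightarrow> okj r p S k req \<sigma> j"
  shows "\<exists>l<k. okj r p S k req (\<sigma>(n := l)) n"
proof -
  let ?P = "req n"
  have Pr: "fst ?P < r" "snd ?P < p" using rq_rng n by auto
  define img where "img = req ` {..<k}"
  define T1 where "T1 = (\<Union>Q\<in>img - {?P}. {l. l < k \<and> Q \<in> Ln r p S l ?P})"
  define J where "J = {j'. j' < n \<and> \<not> isfirst req j'}"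
  define C where "C = (\<lambda>j'. if req j' = ?P then {\<sigma> j'}
                      else {l. l < k \<and> Ln r p S l ?P \<inter> Ln r p S (\<sigma> j') (req j') \<noteq> {}})"
  define F where "F = T1 \<union> (\<Union>j'\<in>J. C j')"
  define Fi where "Fi = {j. j < k \<and> isfirst req j}"
  have finimg: "finite img" unfolding img_def by simp
  have finJ: "finite J" unfolding J_def by simp
  have cT1: "card T1 \<le> card (img - {?P})"
    unfolding T1_def
  proof (rule card_UN_le1)
    show "finite (img - {?P})" using finimg by simp
    fix Q assume "Q \<in> img - {?P}"
    then show "card {l. l < k \<and> Q \<in> Ln r p S l ?P} \<le> 1" using card_T1[OF Pr] by blast
  qed
  have cC: "card (\<Union>j'\<in>J. C j') \<le> card J"
  proof (rule card_UN_le1[OF finJ])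
    fix j' assume "j' \<in> J"
    then have j': "j' < n" "\<not> isfirst req j'" unfolding J_def by auto
    then have ok: "okj r p S k req \<sigma> j'" using IH by blast
    show "card (C j') \<le> 1"
    proof (cases "req j' = ?P")
      case True then show ?thesis unfolding C_def by simp
    next
      case False
      have "\<sigma> j' < k" using ok unfolding okj_def by blast
      moreover have "?P \<notin> Ln r p S (\<sigma> j') (req j')"
        using ok False n unfolding okj_def by metis
      ultimately show ?thesis unfolding C_def using False card_C[OF Pr] by simp
    qed
  qed
  have Pimg: "?P \<in> img" unfolding img_def using n by simp
  have "card img \<le> card Fi"
  proof -
    have "img \<subseteq> req ` Fi" unfolding img_def Fi_def by (rule img_first)
    then have "card img \<le> card (req ` Fi)" by (rule card_mono[rotated]) (simp add: Fi_def)
    also have "\<dots> \<le> card Fi" by (rule card_image_le) (simp add: Fi_def)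
    finally show ?thesis .
  qed
  moreover have "card (img - {?P}) < card img" using finimg Pimg by (rule card_Diff1_less)
  moreover have "card Fi + card J + 1 \<le> k"
  proof -
    have d1: "Fi \<inter> J = {}" unfolding Fi_def J_def by auto
    have d2: "(Fi \<union> J) \<inter> {n} = {}" unfolding Fi_def J_def using nf by auto
    have "Fi \<union> J \<union> {n} \<subseteq> {..<k}" unfolding Fi_def J_def using n by auto
    then have "card (Fi \<union> J \<union> {n}) \<le> k" using card_mono[of "{..<k}"] by fastforce
    moreover have "card (Fi \<union> J \<union> {n}) = card Fi + card J + 1"
      using d1 d2 finJ by (simp add: Fi_def card_Un_disjoint)
    ultimately show ?thesis by simp
  qed
  ultimately have cF: "card F < k"
    using cT1 cC card_Un_le[of T1 "\<Union>j'\<in>J. C j'"] unfolding F_def by linarith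
  have finF: "finite F"
  proof -
    have "T1 \<subseteq> {..<k}" unfolding T1_def by auto
    then have "finite T1" by (rule finite_subset) simp
    moreover have "finite (C j')" for j' unfolding C_def by auto
    ultimately show ?thesis unfolding F_def using finJ by auto
  qed
  have "\<not> {..<k} \<subseteq> F"
  proof
    assume "{..<k} \<subseteq> F"
    then have "card {..<k} \<le> card F" using finF by (rule card_mono[rotated])
    then show False using cF by simp
  qed
  then obtain l where l: "l < k" "l \<notin> F" by auto
  have "okj r p S k req (\<sigma>(n := l)) n"
    unfolding okj_def
  proof (intro conjI allI impI)
    show "(\<sigma>(n := l)) n < k" using l by simp
  next
    fix j' assume j': "j' < k" "req j' \<noteq> req n"
    show "req j' \<notin> Ln r p S ((\<sigma>(n := l)) n) (req n)"
    proof
      assume "req j' \<in> Ln r p S ((\<sigma>(n := l)) n) (req n)"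
      then have "l \<in> T1" unfolding T1_def img_def using j' l by auto
      then show False using l unfolding F_def by auto
    qed
  next
    fix j' assume j': "j' < n" "\<not> isfirst req j'"
    then have jJ: "j' \<in> J" unfolding J_def by simp
    have "l \<notin> C j'" using l jJ unfolding F_def by auto
    then show "if req j' = req n then (\<sigma>(n := l)) j' \<noteq> (\<sigma>(n := l)) n
        else Ln r p S ((\<sigma>(n := l)) n) (req n) \<inter> Ln r p S ((\<sigma>(n := l)) j') (req j') = {}"
    proof (cases "req j' = req n")
      case True
      then have "l \<noteq> \<sigma> j'" using \<open>l \<notin> C j'\<close> unfolding C_def by simp
      then show ?thesis using True j' by simp
    next
      case False
      then have "Ln r p S l ?P \<inter> Ln r p S (\<sigma> j') (req j') = {}"
        using \<open>l \<notin> C j'\<close> l(1) unfolding C_def by simp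
      then show ?thesis using False j' by simp
    qed
  qed
  then show ?thesis using l by blast
qed

lemma greedy: "n \<le> k \<Longrightarrow> \<exists>\<sigma>. \<forall>j<n. \<not> isfirst req j \<longrightarrow> okj r p S k req \<sigma> j"
proof (induction n)
  case 0 then show ?case by simp
next
  case (Suc n)
  then obtain \<sigma> where IH: "\<forall>j<n. \<not> isfirst req j \<longrightarrow> okj r p S k req \<sigma> j" by auto
  show ?case
  proof (cases "isfirst req n")
    case True
    have "\<forall>j<Suc n. \<not> isfirst req j \<longrightarrow> okj r p S k req \<sigma> j"
    proof (intro allI impI)
      fix j assume "j < Suc n" "\<not> isfirst req j"
      then have "j < n" using True by (cases "j = n") auto
      then show "okj r p S k req \<sigma> j" using IH \<open>\<not> isfirst req j\<close> by blast
    qed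
    then show ?thesis by blast
  next
    case False
    obtain l where l: "okj r p S k req (\<sigma>(n := l)) n"
      using greedy_step[OF _ False IH] Suc.prems by auto
    have "\<forall>j<Suc n. \<not> isfirst req j \<longrightarrow> okj r p S k req (\<sigma>(n := l)) j"
    proof (intro allI impI)
      fix j assume "j < Suc n" "\<not> isfirst req j"
      show "okj r p S k req (\<sigma>(n := l)) j"
      proof (cases "j = n")
        case True then show ?thesis using l by simp
      next
        case False
        then have "j < n" using \<open>j < Suc n\<close> by simp
        have "okj r p S k req (\<sigma>(n := l)) j = okj r p S k req \<sigma> j"
          by (rule okj_upd) (use \<open>j < n\<close> in auto)
        then show ?thesis using IH \<open>j < n\<close> \<open>\<not> isfirst req j\<close> by simp
      qed
    qed
    then show ?thesis by blast
  qed
qed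

end



lemma card_messages:
  assumes "finite I"
  shows "card (messages I) = 2 ^ card I"
proof -
  have e: "messages I = (\<lambda>A i. i \<in> A) ` Pow I"
  proof
    show "messages I \<subseteq> (\<lambda>A i. i \<in> A) ` Pow I"
    proof
      fix x assume "x \<in> messages I"
      then have "{i. x i} \<in> Pow I" "x = (\<lambda>i. i \<in> {i. x i})" unfolding messages_def by auto
      then show "x \<in> (\<lambda>A i. i \<in> A) ` Pow I" by blast
    qed
    show "(\<lambda>A i. i \<in> A) ` Pow I \<subseteq> messages I" unfolding messages_def by auto
  qed
  have "inj_on (\<lambda>A i. i \<in> A) (Pow I)"
    by (rule inj_onI) (metis Collect_mem_eq)
  then have "card (messages I) = card (Pow I)" unfolding e by (rule card_image)
  then show ?thesis using assms by (simp add: card_Pow)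
qed

lemma card_info: "card (info_idx r p) = r * p"
  unfolding info_idx_def by (simp add: card_cartesian_product)

lemma card_code:
  shows "card (code r p S) = 2 ^ (r * p)"
proof -
  have "inj_on (encode r p S) (messages (info_idx r p))"
  proof (rule inj_onI)
    fix x y assume x: "x \<in> messages (info_idx r p)" and y: "y \<in> messages (info_idx r p)"
      and e: "encode r p S x = encode r p S y"
    show "x = y"
    proof
      fix q :: "nat \<times> nat"
      obtain i j where q: "q = (i,j)" by fastforce
      show "x q = y q"
      proof (cases "q \<in> info_idx r p")
        case True
        then have "i < r" "j < p" unfolding info_idx_def q by auto
        moreover have "encode r p S x (Info i j) = encode r p S y (Info i j)" using e by simp
        ultimately show ?thesis unfolding encode_def q by simp
      next
        case False
        have "\<not> x q" "\<not> y q" using x y False unfolding messages_def by blast+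
        then show ?thesis by simp
      qed
    qed
  qed
  then have "card (code r p S) = card (messages (info_idx r p))"
    unfolding code_def by (rule card_image)
  also have "\<dots> = 2 ^ (r * p)"
    by (simp add: card_messages card_info info_idx_def)
  finally show ?thesis .
qed

definition infc :: "nat \<times> nat \<Rightarrow> coord" where
  "infc q = Info (fst q) (snd q)"

lemma infc_inj: "infc a = infc b \<longleftrightarrow> a = b"
  unfolding infc_def by (cases a; cases b) auto

definition Rset :: "nat \<Rightarrow> nat \<Rightarrow> nat set \<Rightarrow> (nat \<Rightarrow> nat \<times> nat) \<Rightarrow> (nat \<Rightarrow> nat) \<Rightarrow> nat \<Rightarrow> coord set" where
  "Rset r p S req \<sigma> j = (if isfirst req j then {infc (req j)}
     else insert (Red (\<sigma> j) (tof p (sel S (\<sigma> j)) (req j))) (infc ` (Ln r p S (\<sigma> j) (req j) - {req j})))"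

lemma parity_split:
  assumes "finite L" "P \<in> L"
  shows "parity x L = (x P \<noteq> odd (card {q \<in> L - {P}. x q}))"
proof -
  have fin: "finite {q \<in> L - {P}. x q}" using assms by simp
  show ?thesis
  proof (cases "x P")
    case True
    then have "{a \<in> L. x a} = insert P {q \<in> L - {P}. x q}" using assms by auto
    then have "card {a \<in> L. x a} = Suc (card {q \<in> L - {P}. x q})" using fin by simp
    then show ?thesis using True unfolding parity_def by simp
  next
    case False
    then have "{a \<in> L. x a} = {q \<in> L - {P}. x q}" by auto
    then show ?thesis using False unfolding parity_def by simp
  qed
qed

lemma card_diag: "card (diag r p s t) \<le> r" "finite (diag r p s t)"
proof -
  have e: "diag r p s t = (\<lambda>i. (i, (t + i * s) mod p)) ` {..<r}" unfolding diag_def by auto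
  show "card (diag r p s t) \<le> r" unfolding e using card_image_le[of "{..<r}"] by fastforce
  show "finite (diag r p s t)" unfolding e by simp
qed



context bctx
begin

lemma P_in_Ln: "j < k \<Longrightarrow> req j \<in> Ln r p S l (req j)"
  using Ln_iff onl_self rq_rng by blast

lemma Ln_fin: "finite (Ln r p S l P)" "card (Ln r p S l P) \<le> r"
  unfolding Ln_def using card_diag by auto

lemma Ln_rng: "q \<in> Ln r p S l P \<Longrightarrow> fst q < r \<and> snd q < p"
  using Ln_iff unfolding onl_def by blast

context
  fixes \<sigma> :: "nat \<Rightarrow> nat"
  assumes sig: "\<forall>j<k. \<not> isfirst req j \<longrightarrow> okj r p S k req \<sigma> j"
begin

lemma sig_lt: "j < k \<Longrightarrow> \<not> isfirst req j \<Longrightarrow> \<sigma> j < k"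
  using sig unfolding okj_def by blast

lemma R_sub: "j < k \<Longrightarrow> Rset r p S req \<sigma> j \<subseteq> coords r p S"
proof -
  assume j: "j < k"
  show ?thesis
  proof (cases "isfirst req j")
    case True
    then show ?thesis using rq_rng[OF j] unfolding Rset_def coords_def infc_def by auto
  next
    case False
    have "\<sigma> j < card S" using sig_lt[OF j False] cS by simp
    moreover have "tof p (sel S (\<sigma> j)) (req j) < p" unfolding tof_def using p0 by simp
    moreover have "infc q \<in> coords r p S" if "q \<in> Ln r p S (\<sigma> j) (req j)" for q
      using Ln_rng[OF that] unfolding coords_def infc_def by auto
    ultimately have a: "Red (\<sigma> j) (tof p (sel S (\<sigma> j)) (req j)) \<in> coords r p S"
      and b: "infc ` (Ln r p S (\<sigma> j) (req j) - {req j}) \<subseteq> coords r p S"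
      unfolding coords_def by blast+
    show ?thesis using False a b unfolding Rset_def by simp
  qed
qed

lemma R_card: "j < k \<Longrightarrow> finite (Rset r p S req \<sigma> j) \<and> card (Rset r p S req \<sigma> j) \<le> r"
proof -
  assume j: "j < k"
  show ?thesis
  proof (cases "isfirst req j")
    case True
    then show ?thesis using r0 unfolding Rset_def by simp
  next
    case False
    let ?L = "Ln r p S (\<sigma> j) (req j)"
    have f: "finite (?L - {req j})" using Ln_fin by simp
    have "card (infc ` (?L - {req j})) \<le> card (?L - {req j})" by (rule card_image_le[OF f])
    also have "\<dots> = card ?L - 1" using P_in_Ln[OF j] Ln_fin by simp
    finally have "card (infc ` (?L - {req j})) \<le> r - 1" using Ln_fin(2)[of "\<sigma> j" "req j"] by linarith
    then have "card (insert (Red (\<sigma> j) (tof p (sel S (\<sigma> j)) (req j))) (infc ` (?L - {req j}))) \<le> r"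
      using card_insert_le_m1[of r "infc ` (?L - {req j})"] r0 f by simp
    then show ?thesis using False f unfolding Rset_def by simp
  qed
qed

lemma R_disj_lt:
  assumes j12: "j1 < j2" "j2 < k"
  shows "Rset r p S req \<sigma> j1 \<inter> Rset r p S req \<sigma> j2 = {}"
proof -
  have j1k: "j1 < k" using j12 by simp
  let ?P1 = "req j1" and ?P2 = "req j2"
  show ?thesis
  proof (cases "isfirst req j1"; cases "isfirst req j2")
    assume f1: "isfirst req j1" and f2: "isfirst req j2"
    then have "?P1 \<noteq> ?P2" using j12 unfolding isfirst_def by blast
    then show ?thesis using f1 f2 unfolding Rset_def by (simp add: infc_inj)
  next
    assume f1: "isfirst req j1" and f2: "\<not> isfirst req j2"
    have ok: "okj r p S k req \<sigma> j2" using sig j12 f2 by blast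
    have "infc ?P1 \<notin> infc ` (Ln r p S (\<sigma> j2) ?P2 - {?P2})"
    proof
      assume "infc ?P1 \<in> infc ` (Ln r p S (\<sigma> j2) ?P2 - {?P2})"
      then have "?P1 \<in> Ln r p S (\<sigma> j2) ?P2" "?P1 \<noteq> ?P2" by (auto simp: infc_inj)
      then show False using ok j1k unfolding okj_def by blast
    qed
    then show ?thesis using f1 f2 unfolding Rset_def by (auto simp: infc_def)
  next
    assume f1: "\<not> isfirst req j1" and f2: "isfirst req j2"
    have ok: "okj r p S k req \<sigma> j1" using sig j12 f1 by auto
    have "infc ?P2 \<notin> infc ` (Ln r p S (\<sigma> j1) ?P1 - {?P1})"
    proof
      assume "infc ?P2 \<in> infc ` (Ln r p S (\<sigma> j1) ?P1 - {?P1})"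
      then have "?P2 \<in> Ln r p S (\<sigma> j1) ?P1" "?P2 \<noteq> ?P1" by (auto simp: infc_inj)
      then show False using ok j12 unfolding okj_def by blast
    qed
    then show ?thesis using f1 f2 unfolding Rset_def by (auto simp: infc_def)
  next
    assume f1: "\<not> isfirst req j1" and f2: "\<not> isfirst req j2"
    have ok: "okj r p S k req \<sigma> j2" using sig j12 f2 by blast
    have k1: "\<sigma> j1 < k" using sig_lt[OF j1k f1] .
    have k2: "\<sigma> j2 < k" using sig_lt[OF j12(2) f2] .
    show ?thesis
    proof (cases "?P1 = ?P2")
      case True
      then have ne: "\<sigma> j1 \<noteq> \<sigma> j2" using ok j12 f1 unfolding okj_def by auto
      then have nes: "sel S (\<sigma> j1) \<noteq> sel S (\<sigma> j2)" using sel_inj k1 k2 by blast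
      have "Ln r p S (\<sigma> j1) ?P1 \<inter> Ln r p S (\<sigma> j2) ?P2 \<subseteq> {?P1}"
      proof
        fix q assume q: "q \<in> Ln r p S (\<sigma> j1) ?P1 \<inter> Ln r p S (\<sigma> j2) ?P2"
        have r1: "fst ?P1 < r" "snd ?P1 < p" using rq_rng j1k by auto
        have "?P1 = q"
          apply (rule two_lines[OF pr rp nes sel_lt[OF k1] sel_lt[OF k2]])
          using q True onl_self[OF r1] Ln_iff by auto
        then show "q \<in> {?P1}" by simp
      qed
      then have "infc ` (Ln r p S (\<sigma> j1) ?P1 - {?P1}) \<inter> infc ` (Ln r p S (\<sigma> j2) ?P2 - {?P2}) = {}"
        using True by (auto simp: infc_inj)
      then show ?thesis using f1 f2 ne unfolding Rset_def by (auto simp: infc_def)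
    next
      case False
      then have dj: "Ln r p S (\<sigma> j2) ?P2 \<inter> Ln r p S (\<sigma> j1) ?P1 = {}"
        using ok j12 f1 unfolding okj_def by auto
      have red: "Red (\<sigma> j1) (tof p (sel S (\<sigma> j1)) ?P1) \<noteq> Red (\<sigma> j2) (tof p (sel S (\<sigma> j2)) ?P2)"
      proof
        assume "Red (\<sigma> j1) (tof p (sel S (\<sigma> j1)) ?P1) = Red (\<sigma> j2) (tof p (sel S (\<sigma> j2)) ?P2)"
        then have e1: "\<sigma> j1 = \<sigma> j2" and e2: "tof p (sel S (\<sigma> j1)) ?P1 = tof p (sel S (\<sigma> j2)) ?P2"
          by blast+
        have e3: "tof p (sel S (\<sigma> j2)) ?P1 = tof p (sel S (\<sigma> j2)) ?P2" using e2 unfolding e1 .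
        have "Ln r p S (\<sigma> j1) ?P1 = Ln r p S (\<sigma> j2) ?P2" unfolding Ln_def e1 e3 by (rule refl)
        then show False using dj P_in_Ln[OF j1k] by auto
      qed
      have "infc ` (Ln r p S (\<sigma> j1) ?P1 - {?P1}) \<inter> infc ` (Ln r p S (\<sigma> j2) ?P2 - {?P2}) = {}"
        using dj by (auto simp: infc_inj)
      then show ?thesis using f1 f2 red unfolding Rset_def by (auto simp: infc_def)
    qed
  qed
qed

lemma R_disj:
  assumes "j1 < k" "j2 < k" "j1 \<noteq> j2"
  shows "Rset r p S req \<sigma> j1 \<inter> Rset r p S req \<sigma> j2 = {}"
proof (cases "j1 < j2")
  case True then show ?thesis using R_disj_lt assms by blast
next
  case False
  then have "j2 < j1" using assms by simp
  then show ?thesis using R_disj_lt assms by blast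
qed

lemma R_dec:
  assumes j: "j < k"
  shows "\<exists>g. \<forall>x \<in> messages (info_idx r p).
     g (\<lambda>c. if c \<in> Rset r p S req \<sigma> j then encode r p S x c else False) = x (req j)"
proof (cases "isfirst req j")
  case True
  obtain a b where ab: "req j = (a,b)" by fastforce
  have mem: "infc (req j) \<in> Rset r p S req \<sigma> j" using True unfolding Rset_def by simp
  have rr: "a < r" "b < p" using rq_rng[OF j] ab by auto
  have "(\<lambda>w. w (infc (req j))) (\<lambda>c. if c \<in> Rset r p S req \<sigma> j then encode r p S x c else False) = x (req j)" for x
    using mem rr ab by (simp add: encode_def infc_def)
  note h = this
  show ?thesis by (rule exI[of _ "\<lambda>w. w (infc (req j))"], intro ballI, rule h)
next
  case False
  let ?l = "\<sigma> j" and ?P = "req j"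
  let ?t = "tof p (sel S ?l) ?P"
  let ?L = "Ln r p S ?l ?P"
  let ?R = "Rset r p S req \<sigma> j"
  have R: "?R = insert (Red ?l ?t) (infc ` (?L - {?P}))" using False unfolding Rset_def by simp
  have lk: "?l < card S" "?t < p" using sig_lt[OF j False] cS p0 unfolding tof_def by auto
  define g where "g = (\<lambda>w :: coord \<Rightarrow> bool. w (Red ?l ?t) \<noteq> odd (card {q \<in> ?L - {?P}. w (infc q)}))"
  have "g (\<lambda>c. if c \<in> ?R then encode r p S x c else False) = x ?P" for x
  proof -
    let ?w = "\<lambda>c. if c \<in> ?R then encode r p S x c else False"
    have "Red ?l ?t \<in> ?R" unfolding R by simp
    then have w1: "?w (Red ?l ?t) = parity x ?L" using lk unfolding encode_def Ln_def by simp
    have A: "{q \<in> ?L - {?P}. ?w (infc q)} = {q \<in> ?L - {?P}. x q}"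
    proof (rule Collect_cong)
      fix q show "(q \<in> ?L - {?P} \<and> ?w (infc q)) = (q \<in> ?L - {?P} \<and> x q)"
      proof (cases "q \<in> ?L - {?P}")
        case True
        then have "infc q \<in> ?R" unfolding R by blast
        moreover have "fst q < r \<and> snd q < p" using True Ln_rng by blast
        ultimately have "?w (infc q) = x q" by (simp add: encode_def infc_def)
        then show ?thesis using True by simp
      next
        case False
        then show ?thesis by blast
      qed
    qed
    have B: "parity x ?L = (x ?P \<noteq> odd (card {q \<in> ?L - {?P}. x q}))"
      by (rule parity_split[OF Ln_fin(1) P_in_Ln[OF j]])
    show ?thesis unfolding g_def w1 A B by blast
  qed
  note h = this
  show ?thesis by (rule exI[of _ g], intro ballI, rule h)
qed

end

end



theorem theorem9:
  fixes r p k :: nat and S :: "nat set"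
  assumes "0 < r" and "r \<le> p" and "prime p"
    and "S \<subseteq> {0..<p}" and "card S = k"
    and "no_weighted_AP r p S"
  shows "batch_code (info_idx r p) (coords r p S) (encode r p S) r k
         \<and> card (code r p S) = 2 ^ (r * p)"
proof
  show "card (code r p S) = 2 ^ (r * p)" by (rule card_code)
  show "batch_code (info_idx r p) (coords r p S) (encode r p S) r k"
    unfolding batch_code_def
  proof (intro allI impI)
    fix req :: "nat \<Rightarrow> nat \<times> nat"
    assume rq: "\<forall>j<k. req j \<in> info_idx r p"
    interpret bctx r p k S req
      using assms rq by unfold_locales auto
    obtain \<sigma> where sig: "\<forall>j<k. \<not> isfirst req j \<longrightarrow> okj r p S k req \<sigma> j"
      using greedy[of k] by auto
    have a: "\<forall>j<k. Rset r p S req \<sigma> j \<subseteq> coords r p S \<and> finite (Rset r p S req \<sigma> j)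
        \<and> card (Rset r p S req \<sigma> j) \<le> r"
      using R_sub[OF sig] R_card[OF sig] by blast
    have b: "\<forall>j1<k. \<forall>j2<k. j1 \<noteq> j2 \<longrightarrow> Rset r p S req \<sigma> j1 \<inter> Rset r p S req \<sigma> j2 = {}"
      using R_disj[OF sig] by blast
    have c: "\<forall>j<k. \<exists>g. \<forall>x \<in> messages (info_idx r p).
       g (\<lambda>c. if c \<in> Rset r p S req \<sigma> j then encode r p S x c else False) = x (req j)"
      using R_dec[OF sig] by blast
    show "\<exists>R. (\<forall>j<k. R j \<subseteq> coords r p S \<and> finite (R j) \<and> card (R j) \<le> r) \<and>
           (\<forall>j1<k. \<forall>j2<k. j1 \<noteq> j2 \<longrightarrow> R j1 \<inter> R j2 = {}) \<and>
           (\<forall>j<k. \<exists>g. \<forall>x \<in> messages (info_idx r p).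
              g (\<lambda>c. if c \<in> R j then encode r p S x c else False) = x (req j))"
      by (rule exI[of _ "Rset r p S req \<sigma>"]) (use a b c in blast)
  qed
qed


end
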